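(* Let $F$ and $V=(v_{pq})$ be $n\times n$ real matrices and let $i\in\{1,\dots,n\}$. Suppose that $V_{[i,i]}$ is nonsingular. Consider $v_{ii}\to\infty$ with $F$ and all other entries of $V$ held fixed (so that $V$ is invertible for all sufficiently large $v_{ii}$). Then \[ \lim_{v_{ii}\to\infty}\rho(FV^{-1})=\rho\big(F_{[i,i]}(V_{[i,i]})^{-1}\big). \]
   Context: For a matrix $M$, $M_{[j,k]}$ denotes the matrix obtained from $M$ by deleting its $j$th row and $k$th column; $v_{pq}$ denotes the $(p,q)$ entry of $V$. $\rho(M)$ denotes the spectral radius of a square matrix $M$, i.e. the maximum modulus of its eigenvalues. *)

theory Defs
  imports "Jordan_Normal_Form.Spectral_Radius" "Jordan_Normal_Form.Gauss_Jordan_Elimination"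
    "Jordan_Normal_Form.Determinant"
begin

definition rho :: "real mat \<Rightarrow> real" where
  "rho A = (if dim_row A = 0 then 0 else spectral_radius (map_mat complex_of_real A))"

text \<open>Matrix inverse (meaningful for invertible square matrices).\<close>
definition minv :: "real mat \<Rightarrow> real mat" where
  "minv A = the (mat_inverse A)"

definition set_diag :: "real mat \<Rightarrow> nat \<Rightarrow> real \<Rightarrow> real mat" where
  "set_diag V i t = mat (dim_row V) (dim_col V) (\<lambda>(p,q). if p = i \<and> q = i then t else V $$ (p,q))"

end

theory Submission
  imports Defs
begin


lemma prod_diff_bound:
  fixes x y :: "nat \<Rightarrow> complex"
  assumes "finite S" "K \<ge> 1" "e \<ge> 0"
    "\<forall>k\<in>S. norm (x k) \<le> K \<and> norm (y k) \<le> K \<and> norm (x k - y k) \<le> e"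
  shows "norm (prod x S - prod y S) \<le> real (card S) * K ^ card S * e"
  using assms
proof (induction S rule: finite_induct)
  case empty
  then show ?case by simp
next
  case (insert a S)
  have IH: "norm (prod x S - prod y S) \<le> real (card S) * K ^ card S * e" using insert by auto
  have ba: "norm (x a) \<le> K" "norm (x a - y a) \<le> e" using insert.prems by auto
  have "norm (prod y S) = (\<Prod>k\<in>S. norm (y k))" by (simp add: prod_norm)
  also have "\<dots> \<le> (\<Prod>k\<in>S. K)" by (rule prod_mono, insert insert.prems, auto)
  finally have bS: "norm (prod y S) \<le> K ^ card S" by simp
  have eq: "prod x (insert a S) - prod y (insert a S) = x a * (prod x S - prod y S) + (x a - y a) * prod y S"
    using insert by (simp add: algebra_simps)
  have "norm (x a * (prod x S - prod y S)) \<le> K * (real (card S) * K ^ card S * e)"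
    unfolding norm_mult by (rule mult_mono[OF ba(1) IH], insert insert.prems, auto)
  moreover have "norm ((x a - y a) * prod y S) \<le> e * K ^ card S"
    unfolding norm_mult by (rule mult_mono[OF ba(2) bS], auto simp: insert)
  moreover have "K ^ card S \<le> K ^ Suc (card S)" using insert.prems by (intro power_increasing, auto)
  hence "e * K ^ card S \<le> e * K ^ Suc (card S)" using insert.prems by (intro mult_left_mono, auto)
  ultimately have "norm (prod x (insert a S) - prod y (insert a S)) \<le>
     K * (real (card S) * K ^ card S * e) + e * K ^ Suc (card S)"
    unfolding eq using norm_triangle_ineq[of "x a * (prod x S - prod y S)" "(x a - y a) * prod y S"] by linarith
  also have "\<dots> = real (card (insert a S)) * K ^ card (insert a S) * e"
    using insert by (simp add: algebra_simps)
  finally show ?case .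
qed

lemma det_diff_bound:
  fixes X Y :: "complex mat"
  assumes X: "X \<in> carrier_mat n n" and Y: "Y \<in> carrier_mat n n" and K: "K \<ge> 1" and e: "e \<ge> 0"
    and b: "\<forall>p<n. \<forall>q<n. norm (X $$ (p,q)) \<le> K \<and> norm (Y $$ (p,q)) \<le> K \<and> norm (X $$ (p,q) - Y $$ (p,q)) \<le> e"
  shows "norm (det X - det Y) \<le> fact n * (real n * K ^ n * e)"
proof -
  let ?P = "{p. p permutes {0..<n}}"
  have fin: "finite ?P" by (simp add: finite_permutations)
  have "det X - det Y = (\<Sum>p\<in>?P. signof p * (\<Prod>i = 0..<n. X $$ (i, p i))) - (\<Sum>p\<in>?P. signof p * (\<Prod>i = 0..<n. Y $$ (i, p i)))"
    by (simp only: det_def'[OF X] det_def'[OF Y])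
  also have "\<dots> = (\<Sum>p\<in>?P. signof p * (\<Prod>i = 0..<n. X $$ (i, p i)) - signof p * (\<Prod>i = 0..<n. Y $$ (i, p i)))"
    by (rule sum_subtractf[symmetric])
  also have "\<dots> = (\<Sum>p\<in>?P. signof p * ((\<Prod>i = 0..<n. X $$ (i, p i)) - (\<Prod>i = 0..<n. Y $$ (i, p i))))"
    by (simp only: right_diff_distrib)
  finally have deq: "norm (det X - det Y) = norm (\<Sum>p\<in>?P. signof p * ((\<Prod>i = 0..<n. X $$ (i, p i)) - (\<Prod>i = 0..<n. Y $$ (i, p i))))"
    by simp
  also have "\<dots> \<le> (\<Sum>p\<in>?P. norm (signof p * ((\<Prod>i = 0..<n. X $$ (i, p i)) - (\<Prod>i = 0..<n. Y $$ (i, p i)))))"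
    by (rule norm_sum)
  also have "\<dots> \<le> (\<Sum>p\<in>?P. real n * K ^ n * e)"
  proof (rule sum_mono)
    fix p assume p: "p \<in> ?P"
    have ns: "norm (signof p :: complex) = 1" by (simp add: sign_def)
    have "norm ((\<Prod>i = 0..<n. X $$ (i, p i)) - (\<Prod>i = 0..<n. Y $$ (i, p i))) \<le> real (card {0..<n}) * K ^ card {0..<n} * e"
    proof (rule prod_diff_bound[OF _ K e])
      show "\<forall>k\<in>{0..<n}. cmod (X $$ (k, p k)) \<le> K \<and> cmod (Y $$ (k, p k)) \<le> K \<and> cmod (X $$ (k, p k) - Y $$ (k, p k)) \<le> e"
      proof
        fix k assume k: "k \<in> {0..<n}"
        have "p k \<in> {0..<n}" using p k by (simp add: permutes_in_image)
        then show "cmod (X $$ (k, p k)) \<le> K \<and> cmod (Y $$ (k, p k)) \<le> K \<and> cmod (X $$ (k, p k) - Y $$ (k, p k)) \<le> e"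
          using b k by simp
      qed
    qed simp
    then show "norm (signof p * ((\<Prod>i = 0..<n. X $$ (i, p i)) - (\<Prod>i = 0..<n. Y $$ (i, p i)))) \<le> real n * K ^ n * e"
      unfolding norm_mult ns by simp
  qed
  also have "\<dots> = fact n * (real n * K ^ n * e)"
  proof -
    have "card ?P = fact n" using card_permutations[of "{0..<n}" n] by simp
    then show ?thesis by simp
  qed
  finally show ?thesis .
qed


lemma eigenvalue_norm_bound:
  fixes X :: "complex mat"
  assumes X: "X \<in> carrier_mat n n" and ev: "eigenvalue X z"
    and M: "\<forall>p<n. \<forall>q<n. norm (X $$ (p,q)) \<le> M"
  shows "norm z \<le> real n * M"
proof -
  from ev obtain v where v: "v \<in> carrier_vec n" "v \<noteq> 0\<^sub>v n" "X *\<^sub>v v = z \<cdot>\<^sub>v v"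
    unfolding eigenvalue_def eigenvector_def using X by auto
  have ne: "{..<n} \<noteq> {}"
  proof
    assume "{..<n} = {}"
    hence "n = 0" by (simp add: lessThan_empty_iff)
    hence "v = 0\<^sub>v n" using v(1) by (intro eq_vecI, auto)
    with v(2) show False by simp
  qed
  define m where "m = Max ((\<lambda>j. norm (v$j)) ` {..<n})"
  have "m \<in> (\<lambda>j. norm (v$j)) ` {..<n}" unfolding m_def using ne by (intro Max_in, auto)
  then obtain k where k: "k < n" "norm (v$k) = m" by auto
  have mj: "norm (v$j) \<le> norm (v$k)" if "j < n" for j
  proof -
    have "norm (v$j) \<le> m" unfolding m_def using that by (intro Max_ge, auto)
    then show ?thesis using k by simp
  qed
  have vk: "v$k \<noteq> 0"
  proof
    assume "v$k = 0"
    hence "v$j = 0" if "j < n" for j using mj[OF that] by simp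
    hence "v = 0\<^sub>v n" using v(1) by (intro eq_vecI, auto)
    with v(2) show False by simp
  qed
  have "z * v$k = (X *\<^sub>v v) $ k" using v(1,3) k by simp
  also have "\<dots> = (\<Sum>j\<in>{0..<n}. X $$ (k,j) * v$j)"
    using X v(1) k by (simp add: scalar_prod_def)
  finally have eq: "norm z * norm (v$k) = norm (\<Sum>j\<in>{0..<n}. X $$ (k,j) * v$j)"
    by (metis norm_mult)
  also have "\<dots> \<le> (\<Sum>j\<in>{0..<n}. norm (X $$ (k,j) * v$j))" by (rule norm_sum)
  also have "\<dots> \<le> (\<Sum>j\<in>{0..<n}. M * norm (v$k))"
  proof (rule sum_mono)
    fix j assume j: "j \<in> {0..<n}"
    have "norm (X $$ (k,j)) \<le> M" using M k j by auto
    moreover have "norm (v$j) \<le> norm (v$k)" using mj j by auto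
    ultimately show "norm (X $$ (k,j) * v$j) \<le> M * norm (v$k)"
      unfolding norm_mult by (intro mult_mono, auto intro: order.trans[OF norm_ge_zero])
  qed
  also have "\<dots> = real n * M * norm (v$k)" by simp
  finally have "norm z * norm (v$k) \<le> real n * M * norm (v$k)" .
  moreover have "norm (v$k) > 0" using vk by simp
  ultimately show ?thesis by simp
qed

lemma prod_list_gt:
  fixes as :: "complex list"
  assumes "as \<noteq> []" "\<forall>a\<in>set as. norm (z - a) > r" "r \<ge> 0"
  shows "norm (\<Prod>a\<leftarrow>as. z - a) > r ^ length as"
  using assms
proof (induction as)
  case Nil
  then show ?case by simp
next
  case (Cons a as)
  show ?case
  proof (cases "as = []")
    case True
    then show ?thesis using Cons.prems by simp
  next
    case False
    have IH: "norm (\<Prod>a\<leftarrow>as. z - a) > r ^ length as" using Cons False by auto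
    have ra: "norm (z - a) > r" using Cons.prems by auto
    have "r * r ^ length as < norm (z - a) * norm (\<Prod>a\<leftarrow>as. z - a)"
      by (rule mult_strict_mono[OF ra IH], insert Cons.prems, auto)
    then show ?thesis by (simp add: norm_mult)
  qed
qed

lemma root_close:
  fixes as :: "complex list"
  assumes ne: "as \<noteq> []" and d: "norm (\<Prod>a\<leftarrow>as. z - a) \<le> \<delta>"
  shows "\<exists>a\<in>set as. norm (z - a) \<le> root (length as) \<delta>"
proof (rule ccontr)
  assume "\<not> ?thesis"
  hence all: "\<forall>a\<in>set as. norm (z - a) > root (length as) \<delta>" by auto
  have d0: "\<delta> \<ge> 0" using d norm_ge_zero order.trans by blast
  have len: "length as > 0" using ne by simp
  have r0: "root (length as) \<delta> \<ge> 0" using d0 by (simp add: real_root_ge_zero)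
  from prod_list_gt[OF ne all r0]
  have "norm (\<Prod>a\<leftarrow>as. z - a) > root (length as) \<delta> ^ length as" .
  also have "root (length as) \<delta> ^ length as = \<delta>" using real_root_pow_pos2[OF len d0] .
  finally show False using d by simp
qed


lemma char_poly_as_det:
  fixes X :: "complex mat"
  assumes X: "X \<in> carrier_mat n n"
  shows "poly (char_poly X) z = det (mat n n (\<lambda>(p,q). (if p = q then z else 0) - X $$ (p,q)))"
proof -
  have "- char_matrix X z = mat n n (\<lambda>(p,q). (if p = q then z else 0) - X $$ (p,q))"
    using X unfolding char_matrix_def by (intro eq_matI, auto)
  then show ?thesis using char_poly_matrix[OF X] by simp
qed

lemma sr_dir:
  fixes X Y :: "complex mat"
  assumes X: "X \<in> carrier_mat n n" and Y: "Y \<in> carrier_mat n n" and n: "n > 0"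
    and M: "M \<ge> 0" and e: "e \<ge> 0"
    and b: "\<forall>p<n. \<forall>q<n. norm (X $$ (p,q)) \<le> M \<and> norm (Y $$ (p,q)) \<le> M \<and> norm (X $$ (p,q) - Y $$ (p,q)) \<le> e"
  shows "spectral_radius X \<le> spectral_radius Y + root n (fact n * (real n * (1 + real n * M + M) ^ n * e))"
proof -
  define K where "K = 1 + real n * M + M"
  define CM where "CM = (\<lambda>(W::complex mat) (z::complex). mat n n (\<lambda>(p,q). (if p = q then z else 0) - W $$ (p,q)))"
  have K1: "K \<ge> 1" using M unfolding K_def by simp
  obtain zX where zX: "zX \<in> spectrum X" "norm zX = spectral_radius X"
    using spectral_radius_mem_max(1)[OF X n] by auto
  have evX: "eigenvalue X zX" using zX unfolding spectrum_def by auto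
  have bX: "\<forall>p<n. \<forall>q<n. norm (X $$ (p,q)) \<le> M" using b by auto
  have nz: "norm zX \<le> real n * M" by (rule eigenvalue_norm_bound[OF X evX bX])
  have p0: "poly (char_poly X) zX = 0" using evX eigenvalue_root_char_poly[OF X] by simp
  have cmX: "CM X zX \<in> carrier_mat n n" "CM Y zX \<in> carrier_mat n n" unfolding CM_def by auto
  have "norm (det (CM X zX) - det (CM Y zX)) \<le> fact n * (real n * K ^ n * e)"
  proof (rule det_diff_bound[OF cmX K1 e], intro allI impI)
    fix p q assume pq: "p < n" "q < n"
    define d where "d = (if p = q then zX else 0)"
    have nd: "norm d \<le> real n * M" using nz M n unfolding d_def by auto
    have bx: "norm (X $$ (p,q)) \<le> M" and bY: "norm (Y $$ (p,q)) \<le> M"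
      and bd: "norm (X $$ (p,q) - Y $$ (p,q)) \<le> e" using b pq by auto
    have ent: "CM W zX $$ (p,q) = d - W $$ (p,q)" for W unfolding CM_def d_def using pq by simp
    have t1: "norm (d - X $$ (p,q)) \<le> norm d + norm (X $$ (p,q))" by (rule norm_triangle_ineq4)
    have t2: "norm (d - Y $$ (p,q)) \<le> norm d + norm (Y $$ (p,q))" by (rule norm_triangle_ineq4)
    have t3: "norm (d - X $$ (p,q) - (d - Y $$ (p,q))) = norm (X $$ (p,q) - Y $$ (p,q))"
    proof -
      have "d - X $$ (p,q) - (d - Y $$ (p,q)) = - (X $$ (p,q) - Y $$ (p,q))" by simp
      then show ?thesis by (simp only: norm_minus_cancel)
    qed
    show "norm (CM X zX $$ (p,q)) \<le> K \<and> norm (CM Y zX $$ (p,q)) \<le> K \<and> norm (CM X zX $$ (p,q) - CM Y zX $$ (p,q)) \<le> e"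
      unfolding ent K_def using t1 t2 t3 nd bx bY bd by linarith
  qed
  moreover have "poly (char_poly X) zX = det (CM X zX)" "poly (char_poly Y) zX = det (CM Y zX)"
    unfolding CM_def by (rule char_poly_as_det[OF X], rule char_poly_as_det[OF Y])
  ultimately have dY: "norm (poly (char_poly Y) zX) \<le> fact n * (real n * K ^ n * e)"
    using p0 by (metis diff_zero norm_minus_commute)
  obtain as where as: "char_poly Y = (\<Prod>a\<leftarrow>as. [:- a, 1:])" "length as = n"
    using char_poly_factorized[OF Y] by auto
  have pe: "poly (char_poly Y) z = (\<Prod>a\<leftarrow>as. z - a)" for z
    unfolding as(1) poly_prod_list by (simp add: o_def)
  have ne: "as \<noteq> []" using as(2) n by auto
  from root_close[OF ne, of zX] dY[unfolded pe] as(2)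
  obtain a where a: "a \<in> set as" "norm (zX - a) \<le> root n (fact n * (real n * K ^ n * e))" by auto
  have "poly (char_poly Y) a = 0" unfolding pe using a(1)
    by (induction as, auto)
  hence "a \<in> spectrum Y" unfolding spectrum_def using eigenvalue_root_char_poly[OF Y] by simp
  hence na: "norm a \<le> spectral_radius Y" using spectral_radius_mem_max(2)[OF Y n] by auto
  have "norm zX \<le> norm a + norm (zX - a)" by (metis norm_triangle_sub add.commute)
  then show ?thesis using zX(2) na a(2) unfolding K_def by simp
qed


lemma sr_tendsto:
  fixes f :: "'a \<Rightarrow> complex mat"
  assumes A: "A \<in> carrier_mat n n" and n: "n > 0"
    and ev: "eventually (\<lambda>t. f t \<in> carrier_mat n n) F"
    and conv: "\<forall>p<n. \<forall>q<n. ((\<lambda>t. f t $$ (p,q)) \<longlongrightarrow> A $$ (p,q)) F"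
  shows "((\<lambda>t. spectral_radius (f t)) \<longlongrightarrow> spectral_radius A) F"
proof -
  define e where "e = (\<lambda>t. \<Sum>p<n. \<Sum>q<n. norm (f t $$ (p,q) - A $$ (p,q)))"
  define M where "M = 1 + (\<Sum>p<n. \<Sum>q<n. norm (A $$ (p,q)))"
  define C where "C = fact n * (real n * (1 + real n * M + M) ^ n)"
  have M0: "M \<ge> 0" unfolding M_def by (simp add: sum_nonneg)
  have e0: "e t \<ge> 0" for t unfolding e_def by (simp add: sum_nonneg)
  have le_e: "norm (f t $$ (p,q) - A $$ (p,q)) \<le> e t" if "p < n" "q < n" for p q t
  proof -
    have "norm (f t $$ (p,q) - A $$ (p,q)) \<le> (\<Sum>q<n. norm (f t $$ (p,q) - A $$ (p,q)))"
      using that by (intro member_le_sum, auto)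
    also have "\<dots> \<le> e t" unfolding e_def using that by (intro member_le_sum[of p], auto simp: sum_nonneg)
    finally show ?thesis .
  qed
  have le_A: "norm (A $$ (p,q)) \<le> M - 1" if "p < n" "q < n" for p q
  proof -
    have "norm (A $$ (p,q)) \<le> (\<Sum>q<n. norm (A $$ (p,q)))"
      using that by (intro member_le_sum, auto)
    also have "\<dots> \<le> M - 1" unfolding M_def using that by (simp, intro member_le_sum[of p], auto simp: sum_nonneg)
    finally show ?thesis .
  qed
  have e_lim: "(e \<longlongrightarrow> 0) F"
  proof -
    have "((\<lambda>t. \<Sum>p<n. \<Sum>q<n. norm (f t $$ (p,q) - A $$ (p,q))) \<longlongrightarrow> (\<Sum>p<n. \<Sum>q<n. norm ((0::complex)))) F"
    proof (intro tendsto_sum tendsto_norm)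
      fix p q assume "p \<in> {..<n}" "q \<in> {..<n}"
      then show "((\<lambda>t. f t $$ (p,q) - A $$ (p,q)) \<longlongrightarrow> 0) F"
        using conv by (intro LIM_zero, auto)
    qed
    then show ?thesis unfolding e_def by simp
  qed
  have ev1: "eventually (\<lambda>t. e t < 1) F" using order_tendstoD(2)[OF e_lim, of 1] by simp
  define g where "g = (\<lambda>t. root n (C * e t))"
  have g_lim: "(g \<longlongrightarrow> 0) F"
  proof -
    have "(g \<longlongrightarrow> root n (C * 0)) F" unfolding g_def by (intro tendsto_real_root tendsto_mult tendsto_const e_lim)
    then show ?thesis by simp
  qed
  have bound: "eventually (\<lambda>t. norm (spectral_radius (f t) - spectral_radius A) \<le> norm (g t) * 1) F"
    using ev ev1
  proof eventually_elim
    case (elim t)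
    have b: "\<forall>p<n. \<forall>q<n. norm (f t $$ (p,q)) \<le> M \<and> norm (A $$ (p,q)) \<le> M \<and> norm (f t $$ (p,q) - A $$ (p,q)) \<le> e t"
    proof (intro allI impI)
      fix p q assume pq: "p < n" "q < n"
      have "norm (f t $$ (p,q)) \<le> norm (A $$ (p,q)) + norm (f t $$ (p,q) - A $$ (p,q))"
        by (metis add.commute diff_add_cancel norm_triangle_ineq)
      then show "norm (f t $$ (p,q)) \<le> M \<and> norm (A $$ (p,q)) \<le> M \<and> norm (f t $$ (p,q) - A $$ (p,q)) \<le> e t"
        using le_e[OF pq, of t] le_A[OF pq] elim(2) by linarith
    qed
    have b': "\<forall>p<n. \<forall>q<n. norm (A $$ (p,q)) \<le> M \<and> norm (f t $$ (p,q)) \<le> M \<and> norm (A $$ (p,q) - f t $$ (p,q)) \<le> e t"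
      using b by (simp add: norm_minus_commute)
    have 1: "spectral_radius (f t) \<le> spectral_radius A + g t"
      using sr_dir[OF elim(1) A n M0 e0 b] unfolding g_def C_def by (simp add: mult.assoc)
    have 2: "spectral_radius A \<le> spectral_radius (f t) + g t"
      using sr_dir[OF A elim(1) n M0 e0 b'] unfolding g_def C_def by (simp add: mult.assoc)
    have "g t \<ge> 0" unfolding g_def C_def using e0[of t] M0 by (intro real_root_ge_zero, simp)
    then show ?case using 1 2 by simp
  qed
  have "((\<lambda>t. spectral_radius (f t) - spectral_radius A) \<longlongrightarrow> 0) F"
    by (rule tendsto_0_le[OF g_lim bound])
  then show ?thesis by (rule LIM_zero_cancel)
qed


lemma sr_zero_col:
  fixes X :: "complex mat"
  assumes X: "X \<in> carrier_mat (Suc m) (Suc m)" and i: "i < Suc m"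
    and z: "\<forall>p<Suc m. X $$ (p,i) = 0"
  shows "spectral_radius X = (if m = 0 then 0 else spectral_radius (mat_delete X i i))"
proof -
  define X' where "X' = mat_delete X i i"
  have X': "X' \<in> carrier_mat m m" unfolding X'_def using mat_delete_carrier[OF X] by simp
  have ev: "eigenvalue X w \<longleftrightarrow> w = 0 \<or> eigenvalue X' w" for w
  proof -
    define C where "C = mat (Suc m) (Suc m) (\<lambda>(p,q). (if p = q then w else 0) - X $$ (p,q))"
    have C: "C \<in> carrier_mat (Suc m) (Suc m)" unfolding C_def by simp
    have "det C = (\<Sum>p<Suc m. C $$ (p,i) * cofactor C p i)" by (rule laplace_expansion_column[OF C i])
    also have "\<dots> = (\<Sum>p<Suc m. (if p = i then w * cofactor C i i else 0))"
      using z i unfolding C_def by (intro sum.cong, auto)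
    also have "\<dots> = w * cofactor C i i" using i by simp
    also have "cofactor C i i = det (mat_delete C i i)" unfolding cofactor_def
      by (simp flip: mult_2)
    also have "mat_delete C i i = mat m m (\<lambda>(p,q). (if p = q then w else 0) - X' $$ (p,q))"
      unfolding C_def X'_def mat_delete_def using X by (intro eq_matI, auto)
    finally have "det C = w * poly (char_poly X') w" using char_poly_as_det[OF X', of w] by simp
    moreover have "poly (char_poly X) w = det C" unfolding C_def by (rule char_poly_as_det[OF X])
    ultimately show ?thesis using eigenvalue_root_char_poly[OF X] eigenvalue_root_char_poly[OF X'] by simp
  qed
  have spec: "spectrum X = insert 0 (spectrum X')" unfolding spectrum_def using ev by auto
  show ?thesis
  proof (cases "m = 0")
    case True
    have "spectrum X' = {}"
    proof -
      have "\<not> eigenvalue X' w" for w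
      proof
        assume "eigenvalue X' w"
        then obtain v where v: "v \<in> carrier_vec 0" "v \<noteq> 0\<^sub>v 0"
          unfolding eigenvalue_def eigenvector_def using X' True by auto
        have "v = 0\<^sub>v 0" using v(1) by (intro eq_vecI, auto)
        with v(2) show False by simp
      qed
      then show ?thesis unfolding spectrum_def by auto
    qed
    then show ?thesis using True spec unfolding spectral_radius_def by simp
  next
    case False
    have fin: "finite (norm ` spectrum X')" using card_finite_spectrum(1)[OF X'] by simp
    have ne: "norm ` spectrum X' \<noteq> {}" using spectrum_non_empty[OF X'] False by simp
    have "Max (norm ` spectrum X') \<ge> 0"
    proof -
      obtain w where "w \<in> spectrum X'" using spectrum_non_empty[OF X'] False by auto
      hence "norm w \<le> Max (norm ` spectrum X')" using fin by (intro Max_ge, auto)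
      then show ?thesis using norm_ge_zero order.trans by blast
    qed
    then show ?thesis using False spec fin ne unfolding spectral_radius_def X'_def[symmetric]
      by (simp add: Max_insert)
  qed
qed



lemma det_entry_affine:
  fixes A :: "real mat"
  assumes A: "A \<in> carrier_mat n n" and a: "a < n" and b: "b < n"
  shows "det (mat n n (\<lambda>(p,q). if p = a \<and> q = b then t else A $$ (p,q)))
    = t * cofactor A a b + (\<Sum>j\<in>{..<n}-{b}. A $$ (a,j) * cofactor A a j)"
proof -
  define M where "M = mat n n (\<lambda>(p,q). if p = a \<and> q = b then t else A $$ (p,q))"
  have M: "M \<in> carrier_mat n n" unfolding M_def by simp
  have del: "mat_delete M a j = mat_delete A a j" for j
    using A unfolding M_def mat_delete_def by (intro eq_matI, auto)
  have "det M = (\<Sum>j<n. M $$ (a,j) * cofactor M a j)" by (rule laplace_expansion_row[OF M a])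
  also have "\<dots> = (\<Sum>j<n. (if j = b then t else A $$ (a,j)) * cofactor A a j)"
    unfolding cofactor_def del using a by (intro sum.cong, auto simp: M_def)
  also have "\<dots> = t * cofactor A a b + (\<Sum>j\<in>{..<n}-{b}. A $$ (a,j) * cofactor A a j)"
    using b by (subst sum.remove[of _ b], auto intro!: sum.cong)
  finally show ?thesis unfolding M_def .
qed

lemma set_diag_alt: "V \<in> carrier_mat n n \<Longrightarrow>
  set_diag V i t = mat n n (\<lambda>(p,q). if p = i \<and> q = i then t else V $$ (p,q))"
  unfolding set_diag_def by auto

lemma cofactor_set_diag_affine:
  fixes V :: "real mat"
  assumes V: "V \<in> carrier_mat n n" and i: "i < n" and p: "p < n" and q: "q < n"
  shows "\<exists>c d. (\<forall>t. cofactor (set_diag V i t) p q = c * t + d) \<and> ((p = i \<or> q = i) \<longrightarrow> c = 0)"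
proof (cases "p = i \<or> q = i")
  case True
  have "mat_delete (set_diag V i t) p q = mat_delete V p q" for t
    using V True unfolding set_diag_alt[OF V] mat_delete_def by (intro eq_matI, auto)
  hence "cofactor (set_diag V i t) p q = 0 * t + cofactor V p q" for t unfolding cofactor_def by simp
  then show ?thesis by blast
next
  case False
  define a where "a = (if i < p then i else i - 1)"
  define b where "b = (if i < q then i else i - 1)"
  define D where "D = mat_delete V p q"
  have D: "D \<in> carrier_mat (n-1) (n-1)" unfolding D_def using mat_delete_carrier[OF V] by simp
  have a: "a < n - 1" and b: "b < n - 1" using False i p q unfolding a_def b_def by auto
  have ia: "((if r < p then r else Suc r) = i) = (r = a)" if "r < n - 1" for r
    using False that i p unfolding a_def by auto
  have ib: "((if s < q then s else Suc s) = i) = (s = b)" if "s < n - 1" for s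
    using False that i q unfolding b_def by auto
  have eq: "mat_delete (set_diag V i t) p q = mat (n-1) (n-1) (\<lambda>(r,s). if r = a \<and> s = b then t else D $$ (r,s))" for t
  proof (rule eq_matI)
    fix r s assume rs: "r < dim_row (mat (n-1) (n-1) (\<lambda>(r,s). if r = a \<and> s = b then t else D $$ (r,s)))"
      "s < dim_col (mat (n-1) (n-1) (\<lambda>(r,s). if r = a \<and> s = b then t else D $$ (r,s)))"
    hence rs': "r < n - 1" "s < n - 1" by auto
    have r1: "(if r < p then r else Suc r) < n" "(if s < q then s else Suc s) < n" using rs' by auto
    show "mat_delete (set_diag V i t) p q $$ (r,s) = mat (n-1) (n-1) (\<lambda>(r,s). if r = a \<and> s = b then t else D $$ (r,s)) $$ (r,s)"
      unfolding set_diag_alt[OF V] mat_delete_def D_def using rs' r1 V ia[OF rs'(1)] ib[OF rs'(2)]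
      by simp
  qed (insert V, auto simp: set_diag_def)
  have "cofactor (set_diag V i t) p q = ((-1)^(p+q) * cofactor D a b) * t + (-1)^(p+q) * (\<Sum>j\<in>{..<n-1}-{b}. D $$ (a,j) * cofactor D a j)" for t
    unfolding cofactor_def[of "set_diag V i t"] eq det_entry_affine[OF D a b] by (simp add: algebra_simps)
  then show ?thesis using False by blast
qed

lemma minv_props:
  fixes A :: "real mat"
  assumes A: "A \<in> carrier_mat n n" and d: "det A \<noteq> 0"
  shows "minv A \<in> carrier_mat n n" "A * minv A = 1\<^sub>m n" "minv A * A = 1\<^sub>m n"
proof -
  have U: "A \<in> Units (ring_mat TYPE(real) n undefined)" by (rule det_non_zero_imp_unit[OF A d])
  have "mat_inverse A \<noteq> None" using mat_inverse(1)[OF A, of undefined] U by auto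
  then obtain B where B: "mat_inverse A = Some B" by auto
  have mB: "minv A = B" unfolding minv_def B by simp
  from mat_inverse(2)[OF A B] show "minv A \<in> carrier_mat n n" "A * minv A = 1\<^sub>m n" "minv A * A = 1\<^sub>m n"
    unfolding mB by auto
qed

lemma minv_adj:
  fixes A :: "real mat"
  assumes A: "A \<in> carrier_mat n n" and d: "det A \<noteq> 0" and p: "p < n" and q: "q < n"
  shows "minv A $$ (p,q) = cofactor A q p / det A"
proof -
  note mi = minv_props[OF A d]
  note ad = adj_mat[OF A]
  have "adj_mat A = adj_mat A * (A * minv A)" using mi ad by simp
  also have "\<dots> = (adj_mat A * A) * minv A" by (rule assoc_mult_mat[symmetric, OF ad(1) A mi(1)])
  also have "\<dots> = det A \<cdot>\<^sub>m minv A" unfolding ad(3) using mi mult_smult_assoc_mat[of "1\<^sub>m n" n n "minv A" n "det A"] by simp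
  finally have "adj_mat A $$ (p,q) = det A * minv A $$ (p,q)" using mi p q by (metis index_smult_mat(1) carrier_matD)
  moreover have "adj_mat A $$ (p,q) = cofactor A q p" unfolding adj_mat_def using A p q by simp
  ultimately show ?thesis using d by (simp add: field_simps)
qed

lemma ratio_lim:
  fixes c d e f :: real
  assumes e: "e \<noteq> 0"
  shows "((\<lambda>t. (c * t + d) / (e * t + f)) \<longlongrightarrow> c / e) at_top"
proof -
  have "((\<lambda>t. (c + d * inverse t) / (e + f * inverse t)) \<longlongrightarrow> (c + d * 0) / (e + f * 0)) at_top"
    using e by (intro tendsto_intros tendsto_inverse_0_at_top filterlim_ident, auto)
  moreover have "eventually (\<lambda>t. (c + d * inverse t) / (e + f * inverse t) = (c * t + d) / (e * t + f)) at_top"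
    using eventually_gt_at_top[of 0]
  proof eventually_elim
    case (elim t)
    have "(c + d * inverse t) / (e + f * inverse t) = ((c + d * inverse t) * t) / ((e + f * inverse t) * t)"
      using elim by simp
    also have "\<dots> = (c * t + d) / (e * t + f)" using elim by (simp add: algebra_simps)
    finally show ?case .
  qed
  ultimately show ?thesis by (simp add: tendsto_cong)
qed

lemma sum_insert_index:
  assumes i: "i < Suc m"
  shows "(\<Sum>r<Suc m. f r) = f i + (\<Sum>r<m. f (insert_index i r))"
proof -
  have "(\<Sum>r<Suc m. f r) = f i + (\<Sum>r\<in>{0..<Suc m} - {i}. f r)"
    using i unfolding lessThan_atLeast0 by (intro sum.remove, auto)
  also have "{0..<Suc m} - {i} = insert_index i ` {0..<m}" using insert_index_image[OF i] by simp
  also have "(\<Sum>r\<in>insert_index i ` {0..<m}. f r) = (\<Sum>r<m. f (insert_index i r))"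
    by (subst sum.reindex, rule insert_index_inj_on, simp add: lessThan_atLeast0)
  finally show ?thesis .
qed


theorem corollary2p3:
  fixes F V :: "real mat" and n i :: nat
  assumes "F \<in> carrier_mat n n" and "V \<in> carrier_mat n n" and "i < n"
    and "det (mat_delete V i i) \<noteq> 0"
  shows "((\<lambda>t. rho (F * minv (set_diag V i t))) \<longlongrightarrow>
            rho (mat_delete F i i * minv (mat_delete V i i))) at_top"
proof -
  note F = assms(1) and V = assms(2) and i = assms(3)
  from i obtain m where n: "n = Suc m" by (cases n, auto)
  define D where "D = mat_delete V i i"
  have D: "D \<in> carrier_mat m m" using mat_delete_carrier[OF V] n unfolding D_def by simp
  have dD: "det D \<noteq> 0" using assms(4) unfolding D_def .
  define Vt where "Vt = (\<lambda>t. set_diag V i t)"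
  have Vt: "Vt t \<in> carrier_mat n n" for t unfolding Vt_def set_diag_def using V by auto
  have Vt_ent: "Vt t $$ (r,q) = V $$ (r,q)" if "r < n" "q < n" "q \<noteq> i" for r q t
    unfolding Vt_def set_diag_alt[OF V] using that by simp
  define d0 where "d0 = (\<Sum>j\<in>{..<n}-{i}. V $$ (i,j) * cofactor V i j)"
  have detVt: "det (Vt t) = t * det D + d0" for t
    unfolding Vt_def set_diag_alt[OF V] det_entry_affine[OF V i i] d0_def cofactor_def D_def
    by (simp flip: mult_2)
  have evdet: "eventually (\<lambda>t. det (Vt t) \<noteq> 0) at_top"
    using eventually_gt_at_top[of "\<bar>d0\<bar> / \<bar>det D\<bar>"]
  proof eventually_elim
    case (elim t)
    have pos: "\<bar>det D\<bar> > 0" using dD by simp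
    have lt: "\<bar>d0\<bar> < t * \<bar>det D\<bar>" using elim pos by (simp add: pos_divide_less_eq)
    have "\<bar>d0\<bar> / \<bar>det D\<bar> \<ge> 0" by simp
    hence t0: "t \<ge> 0" using elim by linarith
    have "t * det D + d0 \<noteq> 0"
    proof
      assume "t * det D + d0 = 0"
      hence "\<bar>d0\<bar> = \<bar>t * det D\<bar>" by (simp add: eq_neg_iff_add_eq_0[symmetric] add.commute)
      also have "\<dots> = t * \<bar>det D\<bar>" using t0 by (simp add: abs_mult)
      finally show False using lt by simp
    qed
    then show ?case using detVt by simp
  qed
  define Pr where "Pr = (\<lambda>p q c d. (\<forall>t. cofactor (Vt t) q p = c * t + d) \<and> ((q = i \<or> p = i) \<longrightarrow> c = (0::real)))"
  have ex: "\<exists>c d. Pr p q c d" if "p < n" "q < n" for p q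
    using cofactor_set_diag_affine[OF V i that(2) that(1)] unfolding Vt_def Pr_def by blast
  define cf where "cf = (\<lambda>p q. SOME c. \<exists>d. Pr p q c d)"
  define df where "df = (\<lambda>p q. SOME d. Pr p q (cf p q) d)"
  have cfd0: "Pr p q (cf p q) (df p q)" if "p < n" "q < n" for p q
  proof -
    have "\<exists>d. Pr p q (cf p q) d" unfolding cf_def by (rule someI_ex, rule ex[OF that])
    then show ?thesis unfolding df_def by (rule someI_ex)
  qed
  have cfd: "(\<forall>t. cofactor (Vt t) q p = cf p q * t + df p q) \<and> ((q = i \<or> p = i) \<longrightarrow> cf p q = 0)"
    if "p < n" "q < n" for p q
    using cfd0[OF that] unfolding Pr_def .
  define W where "W = mat n n (\<lambda>(p,q). cf p q / det D)"
  have W: "W \<in> carrier_mat n n" unfolding W_def by simp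
  have Wt_lim: "((\<lambda>t. minv (Vt t) $$ (p,q)) \<longlongrightarrow> W $$ (p,q)) at_top" if pq: "p < n" "q < n" for p q
  proof -
    have "eventually (\<lambda>t. (cf p q * t + df p q) / (det D * t + d0) = minv (Vt t) $$ (p,q)) at_top"
      using evdet
    proof eventually_elim
      case (elim t)
      show ?case unfolding minv_adj[OF Vt elim pq] detVt using cfd[OF pq] by (simp add: mult.commute)
    qed
    moreover have "((\<lambda>t. (cf p q * t + df p q) / (det D * t + d0)) \<longlongrightarrow> cf p q / det D) at_top"
      by (rule ratio_lim[OF dD])
    ultimately have "((\<lambda>t. minv (Vt t) $$ (p,q)) \<longlongrightarrow> cf p q / det D) at_top"
      by (rule Lim_transform_eventually[rotated])
    then show ?thesis unfolding W_def using pq by simp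
  qed
  have W0: "W $$ (p,i) = 0" "W $$ (i,p) = 0" if "p < n" for p
    using cfd[OF that i] cfd[OF i that] that i unfolding W_def by auto
  have evinv: "eventually (\<lambda>t. minv (Vt t) \<in> carrier_mat n n \<and> minv (Vt t) * Vt t = 1\<^sub>m n) at_top"
    using evdet by eventually_elim (use minv_props[OF Vt] in auto)
  have WV: "(\<Sum>r<n. W $$ (p,r) * V $$ (r,q)) = (if p = q then 1 else 0)"
    if pq: "p < n" "q < n" "q \<noteq> i" for p q
  proof -
    have lim: "((\<lambda>t. \<Sum>r<n. minv (Vt t) $$ (p,r) * V $$ (r,q)) \<longlongrightarrow> (\<Sum>r<n. W $$ (p,r) * V $$ (r,q))) at_top"
      by (intro tendsto_sum tendsto_mult tendsto_const Wt_lim, use pq in auto)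
    have "eventually (\<lambda>t. (\<Sum>r<n. minv (Vt t) $$ (p,r) * V $$ (r,q)) = (if p = q then 1 else 0)) at_top"
      using evinv
    proof eventually_elim
      case (elim t)
      have "(minv (Vt t) * Vt t) $$ (p,q) = (if p = q then 1 else 0)" using elim pq by simp
      moreover have "(minv (Vt t) * Vt t) $$ (p,q) = (\<Sum>r<n. minv (Vt t) $$ (p,r) * V $$ (r,q))"
      proof -
        have mc: "minv (Vt t) \<in> carrier_mat n n" using elim by simp
        show ?thesis using mc pq Vt[of t] Vt_ent[OF _ pq(2,3)]
          by (auto simp: scalar_prod_def lessThan_atLeast0 intro!: sum.cong)
      qed
      ultimately show ?case by simp
    qed
    hence "((\<lambda>t. \<Sum>r<n. minv (Vt t) $$ (p,r) * V $$ (r,q)) \<longlongrightarrow> (if p = q then 1 else 0)) at_top"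
      by (rule tendsto_eventually)
    from tendsto_unique[OF trivial_limit_at_top_linorder lim this] show ?thesis .
  qed
  define W' where "W' = mat_delete W i i"
  have W': "W' \<in> carrier_mat m m" using mat_delete_carrier[OF W] n unfolding W'_def by simp
  have Wn: "W \<in> carrier_mat (Suc m) (Suc m)" and Vn: "V \<in> carrier_mat (Suc m) (Suc m)"
    and Fn: "F \<in> carrier_mat (Suc m) (Suc m)" and i': "i < Suc m" using W V F i n by auto
  have W'D: "W' * D = 1\<^sub>m m"
  proof (rule eq_matI)
    fix p' q' assume "p' < dim_row (1\<^sub>m m)" "q' < dim_col (1\<^sub>m m)"
    hence pq: "p' < m" "q' < m" by auto
    define P where "P = insert_index i p'"
    define Q where "Q = insert_index i q'"
    have PQ: "P < n" "Q < n" "Q \<noteq> i" using pq n unfolding P_def Q_def insert_index_def by auto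
    have PQe: "(P = Q) = (p' = q')" unfolding P_def Q_def insert_index_def by auto
    have "(W' * D) $$ (p',q') = (\<Sum>r<m. W' $$ (p',r) * D $$ (r,q'))"
      using W' D pq by (simp add: scalar_prod_def lessThan_atLeast0)
    also have "\<dots> = (\<Sum>r<m. W $$ (P, insert_index i r) * V $$ (insert_index i r, Q))"
      unfolding W'_def D_def P_def Q_def using pq
      by (intro sum.cong refl, simp add: mat_delete_index[OF Wn i' i'] mat_delete_index[OF Vn i' i'])
    also have "\<dots> = W $$ (P, i) * V $$ (i, Q) + (\<Sum>r<m. W $$ (P, insert_index i r) * V $$ (insert_index i r, Q))"
      using W0(1)[OF PQ(1)] by simp
    also have "\<dots> = (\<Sum>r<n. W $$ (P,r) * V $$ (r,Q))"
      unfolding n by (rule sum_insert_index[OF i', symmetric])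
    also have "\<dots> = (if p' = q' then 1 else 0)" using WV[OF PQ] PQe by simp
    finally show "(W' * D) $$ (p',q') = 1\<^sub>m m $$ (p',q')" using pq by simp
  qed (use W' D in auto)
  have W'inv: "W' = minv D"
  proof -
    note mi = minv_props[OF D dD]
    have "W' = W' * (D * minv D)" using mi W' by simp
    also have "\<dots> = (W' * D) * minv D" by (rule assoc_mult_mat[symmetric, OF W' D mi(1)])
    also have "\<dots> = minv D" unfolding W'D using mi by simp
    finally show ?thesis .
  qed
  define F' where "F' = mat_delete F i i"
  have F': "F' \<in> carrier_mat m m" using mat_delete_carrier[OF F] n unfolding F'_def by simp
  have FW_col: "(F * W) $$ (p,i) = 0" if "p < n" for p
    using that F W W0(1) i by (simp add: scalar_prod_def)
  have FW_del: "mat_delete (F * W) i i = F' * W'"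
  proof (rule eq_matI)
    fix p' q' assume "p' < dim_row (F' * W')" "q' < dim_col (F' * W')"
    hence pq: "p' < m" "q' < m" using F' W' by auto
    define P where "P = insert_index i p'"
    define Q where "Q = insert_index i q'"
    have PQ: "P < n" "Q < n" using pq n unfolding P_def Q_def insert_index_def by auto
    have FWn: "F * W \<in> carrier_mat (Suc m) (Suc m)" using F W n by simp
    have "mat_delete (F * W) i i $$ (p',q') = (F * W) $$ (P, Q)"
      unfolding P_def Q_def using mat_delete_index[OF FWn i' i' pq] by simp
    also have "\<dots> = (\<Sum>r<n. F $$ (P,r) * W $$ (r,Q))"
      using F W PQ by (simp add: scalar_prod_def lessThan_atLeast0)
    also have "\<dots> = F $$ (P,i) * W $$ (i,Q) + (\<Sum>r<m. F $$ (P, insert_index i r) * W $$ (insert_index i r, Q))"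
      unfolding n by (rule sum_insert_index[OF i'])
    also have "\<dots> = (\<Sum>r<m. F' $$ (p',r) * W' $$ (r,q'))"
      unfolding F'_def W'_def P_def Q_def using W0(2)[OF PQ(2)] pq
      by (simp add: mat_delete_index[OF Wn i' i'] mat_delete_index[OF Fn i' i'] Q_def)
    also have "\<dots> = (F' * W') $$ (p',q')"
      using F' W' pq by (simp add: scalar_prod_def lessThan_atLeast0)
    finally show "mat_delete (F * W) i i $$ (p',q') = (F' * W') $$ (p',q')" .
  qed (use F' W' F W n in auto)
  define cm where "cm = map_mat complex_of_real"
  have cmFW: "cm (F * W) \<in> carrier_mat n n" unfolding cm_def using F W by simp
  have n0: "n > 0" using n by simp
  have lim: "((\<lambda>t. spectral_radius (cm (F * minv (Vt t)))) \<longlongrightarrow> spectral_radius (cm (F * W))) at_top"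
  proof (rule sr_tendsto[OF cmFW n0])
    show "eventually (\<lambda>t. cm (F * minv (Vt t)) \<in> carrier_mat n n) at_top"
      using evinv by eventually_elim (use F in \<open>auto simp: cm_def\<close>)
    show "\<forall>p<n. \<forall>q<n. ((\<lambda>t. cm (F * minv (Vt t)) $$ (p,q)) \<longlongrightarrow> cm (F * W) $$ (p,q)) at_top"
    proof (intro allI impI)
      fix p q assume pq: "p < n" "q < n"
      have l1: "((\<lambda>t. complex_of_real (\<Sum>r<n. F $$ (p,r) * minv (Vt t) $$ (r,q))) \<longlongrightarrow>
          complex_of_real (\<Sum>r<n. F $$ (p,r) * W $$ (r,q))) at_top"
        by (intro tendsto_of_real tendsto_sum tendsto_mult tendsto_const Wt_lim, use pq in auto)
      have e1: "eventually (\<lambda>t. complex_of_real (\<Sum>r<n. F $$ (p,r) * minv (Vt t) $$ (r,q)) = cm (F * minv (Vt t)) $$ (p,q)) at_top"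
        using evinv by eventually_elim (use F pq in \<open>auto simp: cm_def scalar_prod_def lessThan_atLeast0\<close>)
      have q1: "complex_of_real (\<Sum>r<n. F $$ (p,r) * W $$ (r,q)) = cm (F * W) $$ (p,q)"
        using F W pq by (simp add: cm_def scalar_prod_def lessThan_atLeast0)
      show "((\<lambda>t. cm (F * minv (Vt t)) $$ (p,q)) \<longlongrightarrow> cm (F * W) $$ (p,q)) at_top"
        using Lim_transform_eventually[OF l1 e1] unfolding q1 .
    qed
  qed
  have lhs: "rho (F * minv (Vt t)) = spectral_radius (cm (F * minv (Vt t)))" for t
    unfolding rho_def cm_def using F n by simp
  have cmn: "cm (F * W) \<in> carrier_mat (Suc m) (Suc m)" using cmFW n by simp
  have cm_del: "mat_delete (cm X) i i = cm (mat_delete X i i)" for X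
    unfolding cm_def mat_delete_def by (intro eq_matI, auto)
  have "spectral_radius (cm (F * W)) = (if m = 0 then 0 else spectral_radius (mat_delete (cm (F * W)) i i))"
  proof (rule sr_zero_col[OF cmn i'], intro allI impI)
    fix p assume "p < Suc m"
    then show "cm (F * W) $$ (p,i) = 0" using FW_col[of p] n F W i by (simp add: cm_def)
  qed
  also have "\<dots> = rho (F' * minv D)"
    unfolding rho_def cm_del FW_del W'inv using F' by (simp add: cm_def)
  finally have rhs: "spectral_radius (cm (F * W)) = rho (F' * minv D)" .
  have fe: "(\<lambda>t. rho (F * minv (Vt t))) = (\<lambda>t. spectral_radius (cm (F * minv (Vt t))))"
    by (rule ext, rule lhs)
  show ?thesis using lim unfolding fe[symmetric] rhs unfolding Vt_def F'_def D_def .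
qed

end
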